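(* Let $A$ be the generator of a $C_0$-semigroup $(e^{tA})_{t\ge 0}$ on a complex Banach space $X$. Then the following are equivalent: (i) $A$ is bounded; (ii) for every norm $\|\cdot\|_0$ on $X$ equivalent to the original norm, the semigroup is quasi-contractive with respect to $\|\cdot\|_0$, i.e. there exists $\lambda\in\mathbb{R}$ such that $\|e^{tA}\|_0\le e^{\lambda t}$ for all $t\ge 0$, where $\|\cdot\|_0$ also denotes the induced operator norm. *)

theory Defs
  imports "HOL-Analysis.Analysis"
begin

class complex_banach = banach +
  fixes scaleC :: "complex \<Rightarrow> 'a \<Rightarrow> 'a"
  assumes scaleC_of_real: "scaleC (complex_of_real r) x = r *\<^sub>R x"
    and scaleC_add_right: "scaleC c (x + y) = scaleC c x + scaleC c y"
    and scaleC_add_left: "scaleC (c + d) x = scaleC c x + scaleC d x"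
    and scaleC_scaleC: "scaleC c (scaleC d x) = scaleC (c * d) x"
    and norm_scaleC: "norm (scaleC c x) = cmod c * norm x"

definition bounded_clinear_op :: "('a::complex_banach \<Rightarrow> 'a) \<Rightarrow> bool" where
  "bounded_clinear_op L \<longleftrightarrow> bounded_linear L \<and> (\<forall>c x. L (scaleC c x) = scaleC c (L x))"

text \<open>A C_0-semigroup (values at negative times are irrelevant).\<close>
definition c0_semigroup :: "(real \<Rightarrow> 'a::complex_banach \<Rightarrow> 'a) \<Rightarrow> bool" where
  "c0_semigroup T \<longleftrightarrow>
     (\<forall>t\<ge>0. bounded_clinear_op (T t)) \<and>
     T 0 = id \<and>
     (\<forall>s\<ge>0. \<forall>t\<ge>0. T (s + t) = T s \<circ> T t) \<and>
     (\<forall>x. ((\<lambda>t. T t x) \<longlongrightarrow> x) (at_right 0))"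

definition gen_dom :: "(real \<Rightarrow> 'a::complex_banach \<Rightarrow> 'a) \<Rightarrow> 'a set" where
  "gen_dom T = {x. \<exists>y. ((\<lambda>h. (1 / h) *\<^sub>R (T h x - x)) \<longlongrightarrow> y) (at_right 0)}"

definition generator :: "(real \<Rightarrow> 'a::complex_banach \<Rightarrow> 'a) \<Rightarrow> 'a \<Rightarrow> 'a" where
  "generator T x = Lim (at_right 0) (\<lambda>h. (1 / h) *\<^sub>R (T h x - x))"

definition generator_bounded :: "(real \<Rightarrow> 'a::complex_banach \<Rightarrow> 'a) \<Rightarrow> bool" where
  "generator_bounded T \<longleftrightarrow> gen_dom T = UNIV \<and> bounded_linear (generator T)"

definition is_cnorm :: "('a::complex_banach \<Rightarrow> real) \<Rightarrow> bool" where
  "is_cnorm n \<longleftrightarrow>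
     (\<forall>x y. n (x + y) \<le> n x + n y) \<and>
     (\<forall>c x. n (scaleC c x) = cmod c * n x) \<and>
     (\<forall>x. n x = 0 \<longrightarrow> x = 0)"

definition equiv_norm :: "('a::complex_banach \<Rightarrow> real) \<Rightarrow> bool" where
  "equiv_norm n \<longleftrightarrow> is_cnorm n \<and>
     (\<exists>a>0. \<exists>b>0. \<forall>x. a * norm x \<le> n x \<and> n x \<le> b * norm x)"

definition opnorm_wrt :: "('a::complex_banach \<Rightarrow> real) \<Rightarrow> ('a \<Rightarrow> 'a) \<Rightarrow> real" where
  "opnorm_wrt n L = Sup ((\<lambda>x. n (L x)) ` {x. n x \<le> 1})"

end

theory Submission
  imports Defs
begin

lemma ubp:
  fixes F :: "'i \<Rightarrow> 'a::banach \<Rightarrow> 'b::real_normed_vector"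
  assumes lin: "\<And>i. bounded_linear (F i)"
    and pb: "\<And>x. \<exists>B. \<forall>i. norm (F i x) \<le> B"
  shows "\<exists>C. \<forall>i x. norm (F i x) \<le> C * norm x"
proof -
  define E where "E k = {x. \<forall>i. norm (F i x) \<le> real k}" for k :: nat
  have clE: "closed (E k)" for k
  proof -
    have "E k = (\<Inter>i. {x. norm (F i x) \<le> real k})" by (auto simp: E_def)
    moreover have "closed {x. norm (F i x) \<le> real k}" for i
      by (intro closed_Collect_le continuous_intros linear_continuous_on lin) 
    ultimately show ?thesis by auto
  qed
  have UE: "\<Union>(range E) = UNIV"
  proof safe
    fix x
    obtain B where B: "\<forall>i. norm (F i x) \<le> B" using pb by blast
    have "B \<le> real (nat \<lceil>B\<rceil>)" by linarith
    then have "x \<in> E (nat \<lceil>B\<rceil>)" using B unfolding E_def by (auto intro: order_trans)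
    then show "x \<in> \<Union>(range E)" by blast
  qed auto
  have "\<exists>k. interior (E k) \<noteq> {}"
  proof (rule ccontr)
    assume "\<not> ?thesis"
    then have "euclidean interior_of \<Union>(range E) = {}"
      by (intro Baire_category_alt) (auto simp: completely_metrizable_space_euclidean clE)
    then show False using UE by simp
  qed
  then obtain k x0 where "x0 \<in> interior (E k)" by blast
  then obtain r where r: "r > 0" "ball x0 r \<subseteq> E k" using mem_interior by blast
  have x0E: "x0 \<in> E k" using r by auto
  have "norm (F i x) \<le> (4 * real k / r) * norm x" for i x
  proof (cases "x = 0")
    case True then show ?thesis using linear_simps(3)[OF lin[of i]] by simp
  next
    case False
    define u where "u = (r / 2 / norm x) *\<^sub>R x"
    have nu: "norm u = r / 2" using False r by (simp add: u_def)
    have "x0 + u \<in> ball x0 r" using nu r by (simp add: dist_norm)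
    then have "norm (F i (x0 + u)) \<le> real k" using r unfolding E_def by auto
    moreover have "norm (F i x0) \<le> real k" using x0E unfolding E_def by auto
    moreover have "F i u = F i (x0 + u) - F i x0" using linear_simps[OF lin[of i]] by simp
    ultimately have "norm (F i u) \<le> 2 * real k" by (metis norm_triangle_ineq4 order_trans add_mono mult_2)
    moreover have "F i u = (r / 2 / norm x) *\<^sub>R F i x" using linear_simps[OF lin[of i]] by (simp add: u_def)
    ultimately have "(r / 2 / norm x) * norm (F i x) \<le> 2 * real k" using r by simp
    then have "r * norm (F i x) \<le> 4 * real k * norm x" using False by (simp add: field_simps)
    then show ?thesis using r False by (simp add: field_simps)
  qed
  then show ?thesis by blast
qed

definition hb_good :: "'a::real_normed_vector \<Rightarrow> ('a \<times> real) set \<Rightarrow> bool" where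
  "hb_good z G \<longleftrightarrow>
    (\<forall>x y1 y2. (x,y1)\<in>G \<longrightarrow> (x,y2)\<in>G \<longrightarrow> y1=y2) \<and>
    (\<forall>x y u v. (x,y)\<in>G \<longrightarrow> (u,v)\<in>G \<longrightarrow> (x+u, y+v) \<in> G) \<and>
    (\<forall>x y c. (x,y)\<in>G \<longrightarrow> (c *\<^sub>R x, c*y) \<in> G) \<and>
    (\<forall>x y. (x,y)\<in>G \<longrightarrow> y \<le> norm x) \<and>
    (z, norm z) \<in> G"

lemma hb_extend:
  fixes M :: "('a::real_normed_vector \<times> real) set"
  assumes g: "hb_good z M" and w: "w \<notin> fst ` M"
  shows "\<exists>M'. hb_good z M' \<and> M \<subseteq> M' \<and> M' \<noteq> M"
proof -
  have sv: "\<And>x y1 y2. (x,y1)\<in>M \<Longrightarrow> (x,y2)\<in>M \<Longrightarrow> y1=y2"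
    and ad: "\<And>x y u v. (x,y)\<in>M \<Longrightarrow> (u,v)\<in>M \<Longrightarrow> (x+u, y+v) \<in> M"
    and sc: "\<And>x y c. (x,y)\<in>M \<Longrightarrow> (c *\<^sub>R x, c*y) \<in> M"
    and dm: "\<And>x y. (x,y)\<in>M \<Longrightarrow> y \<le> norm x"
    and zM: "(z, norm z) \<in> M" using g unfolding hb_good_def by blast+
  have key: "y1 - norm (x1 - w) \<le> norm (x2 + w) - y2" if "(x1,y1)\<in>M" "(x2,y2)\<in>M" for x1 y1 x2 y2
  proof -
    have "y1 + y2 \<le> norm (x1 + x2)" using dm[OF ad[OF that]] .
    also have "\<dots> \<le> norm (x1 - w) + norm (x2 + w)"
      using norm_triangle_ineq[of "x1 - w" "x2 + w"] by simp
    finally show ?thesis by simp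
  qed
  define S where "S = {y - norm (x - w) | x y. (x,y) \<in> M}"
  define c where "c = Sup S"
  have S_ne: "S \<noteq> {}" using zM unfolding S_def by blast
  have S_bdd: "bdd_above S" unfolding S_def bdd_above_def using key[OF _ zM] by blast
  have c_lo: "y - norm (x - w) \<le> c" if "(x,y)\<in>M" for x y
    unfolding c_def by (rule cSup_upper[OF _ S_bdd]) (use that S_def in blast)
  have c_hi: "c \<le> norm (x + w) - y" if "(x,y)\<in>M" for x y
    unfolding c_def by (rule cSup_least[OF S_ne]) (use key[OF _ that] S_def in blast)
  define M' where "M' = {(x + t *\<^sub>R w, y + t * c) | x y t. (x,y) \<in> M}"
  have MM': "M \<subseteq> M'" unfolding M'_def by force
  have zero: "(0, 0) \<in> M" using sc[OF zM, of 0] by simp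
  have wM': "(w, c) \<in> M'" unfolding M'_def using zero by force
  have uniq: "t1 = t2 \<and> x1 = x2" if "(x1,y1)\<in>M" "(x2,y2)\<in>M" "x1 + t1 *\<^sub>R w = x2 + t2 *\<^sub>R w" for x1 y1 x2 y2 t1 t2
  proof (cases "t1 = t2")
    case True then show ?thesis using that by simp
  next
    case False
    have d: "(x1 - x2, y1 - y2) \<in> M" using ad[OF that(1) sc[OF that(2), of "-1"]] by simp
    have "((1/(t2 - t1)) *\<^sub>R (x1 - x2), (1/(t2-t1)) * (y1 - y2)) \<in> M" using sc[OF d] .
    moreover have "x1 - x2 = (t2 - t1) *\<^sub>R w" using that(3) by (simp add: algebra_simps)
    ultimately have "(w, (1/(t2-t1)) * (y1 - y2)) \<in> M" using False by simp
    then show ?thesis using w by force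
  qed
  have "hb_good z M'"
    unfolding hb_good_def
  proof (intro conjI allI impI)
    fix x y1 y2 assume "(x, y1) \<in> M'" "(x, y2) \<in> M'"
    then show "y1 = y2" unfolding M'_def using uniq sv by (smt (verit) Pair_inject mem_Collect_eq)
  next
    fix x y u v assume "(x, y) \<in> M'" "(u, v) \<in> M'"
    then obtain x1 y1 t1 x2 y2 t2 where "(x1,y1)\<in>M" "(x2,y2)\<in>M" "x = x1 + t1 *\<^sub>R w" "y = y1 + t1 * c"
      "u = x2 + t2 *\<^sub>R w" "v = y2 + t2 * c" unfolding M'_def by blast
    then show "(x + u, y + v) \<in> M'" unfolding M'_def
      by (intro CollectI exI[of _ "x1+x2"] exI[of _ "y1+y2"] exI[of _ "t1+t2"]) (auto simp: ad algebra_simps)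
  next
    fix x y a assume "(x, y) \<in> M'"
    then obtain x1 y1 t1 where "(x1,y1)\<in>M" "x = x1 + t1 *\<^sub>R w" "y = y1 + t1 * c" unfolding M'_def by blast
    then show "(a *\<^sub>R x, a * y) \<in> M'" unfolding M'_def
      by (intro CollectI exI[of _ "a *\<^sub>R x1"] exI[of _ "a * y1"] exI[of _ "a * t1"]) (auto simp: sc algebra_simps)
  next
    fix x y assume "(x, y) \<in> M'"
    then obtain x1 y1 t where h: "(x1,y1)\<in>M" "x = x1 + t *\<^sub>R w" "y = y1 + t * c" unfolding M'_def by blast
    show "y \<le> norm x"
    proof (cases "t = 0")
      case True then show ?thesis using h dm by simp
    next
      case False
      show ?thesis
      proof (cases "t > 0")
        case True
        have "c \<le> norm ((1/t) *\<^sub>R x1 + w) - (1/t) * y1" using c_hi[OF sc[OF h(1)]] .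
        then have "t * c \<le> t * (norm ((1/t) *\<^sub>R x1 + w) - (1/t) * y1)" using True by simp
        also have "\<dots> = t * norm ((1/t) *\<^sub>R x1 + w) - y1" using True by (simp add: right_diff_distrib)
        also have "t * norm ((1/t) *\<^sub>R x1 + w) = norm (t *\<^sub>R ((1/t) *\<^sub>R x1 + w))" using True by simp
        also have "t *\<^sub>R ((1/t) *\<^sub>R x1 + w) = x" using True h by (simp add: algebra_simps)
        finally show ?thesis using h by simp
      next
        case False
        then have tn: "t < 0" using \<open>t \<noteq> 0\<close> by simp
        define s where "s = -t"
        have s: "s > 0" using tn s_def by simp
        have "(1/s) * y1 - norm ((1/s) *\<^sub>R x1 - w) \<le> c" using c_lo[OF sc[OF h(1)]] .
        then have e1: "s * ((1/s) * y1 - norm ((1/s) *\<^sub>R x1 - w)) \<le> s * c" using s by simp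
        have e2: "s * ((1/s) * y1 - norm ((1/s) *\<^sub>R x1 - w)) = y1 - s * norm ((1/s) *\<^sub>R x1 - w)"
          using s by (simp add: right_diff_distrib)
        have e3: "s * norm ((1/s) *\<^sub>R x1 - w) = norm (s *\<^sub>R ((1/s) *\<^sub>R x1 - w))" using s by simp
        have e4: "s *\<^sub>R ((1/s) *\<^sub>R x1 - w) = x" using s h(2) s_def by (simp add: algebra_simps)
        have "y1 - norm x \<le> s * c" using e1 e2 e3 unfolding e4 by linarith
        moreover have "t * c = - (s * c)" using s_def by simp
        ultimately show ?thesis using h(3) by linarith
      qed
    qed
  next
    show "(z, norm z) \<in> M'" using MM' zM by blast
  qed
  moreover have "M' \<noteq> M" using wM' w by force
  ultimately show ?thesis using MM' by blast
qed

lemma hahn_banach_norming: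
  fixes z :: "'a::real_normed_vector"
  shows "\<exists>f. bounded_linear f \<and> (\<forall>x. \<bar>f x\<bar> \<le> norm x) \<and> f z = norm z"
proof -
  define A where "A = {G. hb_good z G}"
  define G0 where "G0 = {(t *\<^sub>R z, t * norm z) | t. True}"
  have G0: "hb_good z G0"
    unfolding hb_good_def G0_def
  proof (intro conjI allI impI)
    fix x y1 y2 assume a: "(x, y1) \<in> {(t *\<^sub>R z, t * norm z) |t. True}" "(x, y2) \<in> {(t *\<^sub>R z, t * norm z) |t. True}"
    then obtain t1 t2 where "x = t1 *\<^sub>R z" "y1 = t1 * norm z" "x = t2 *\<^sub>R z" "y2 = t2 * norm z" by blast
    then show "y1 = y2" by (cases "z = 0") auto
  next
    fix x y u v assume "(x, y) \<in> {(t *\<^sub>R z, t * norm z) |t. True}" "(u, v) \<in> {(t *\<^sub>R z, t * norm z) |t. True}"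
    then obtain t1 t2 where "x = t1 *\<^sub>R z" "y = t1 * norm z" "u = t2 *\<^sub>R z" "v = t2 * norm z" by blast
    then show "(x + u, y + v) \<in> {(t *\<^sub>R z, t * norm z) |t. True}"
      by (intro CollectI exI[of _ "t1+t2"]) (simp add: algebra_simps)
  next
    fix x y c assume "(x, y) \<in> {(t *\<^sub>R z, t * norm z) |t. True}"
    then obtain t1 where "x = t1 *\<^sub>R z" "y = t1 * norm z" by blast
    then show "(c *\<^sub>R x, c * y) \<in> {(t *\<^sub>R z, t * norm z) |t. True}"
      by (intro CollectI exI[of _ "c*t1"]) (simp add: algebra_simps)
  next
    fix x y assume "(x, y) \<in> {(t *\<^sub>R z, t * norm z) |t. True}"
    then obtain t1 where "x = t1 *\<^sub>R z" "y = t1 * norm z" by blast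
    then show "y \<le> norm x" by (simp add: mult_right_mono)
  next
    show "(z, norm z) \<in> {(t *\<^sub>R z, t * norm z) |t. True}" by (intro CollectI exI[of _ 1]) simp
  qed
  have "\<forall>C\<in>chains A. \<exists>U\<in>A. \<forall>X\<in>C. X \<subseteq> U"
  proof
    fix C assume C: "C \<in> chains A"
    show "\<exists>U\<in>A. \<forall>X\<in>C. X \<subseteq> U"
    proof (cases "C = {}")
      case True then show ?thesis using G0 A_def by blast
    next
      case False
      then obtain G1 where G1: "G1 \<in> C" by blast
      have CA: "C \<subseteq> A" and ch: "\<And>X Y. X \<in> C \<Longrightarrow> Y \<in> C \<Longrightarrow> X \<subseteq> Y \<or> Y \<subseteq> X"
        using C unfolding chains_def chain_subset_def by blast+
      have gC: "\<And>X. X \<in> C \<Longrightarrow> hb_good z X" using CA A_def by blast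
      have "hb_good z (\<Union>C)"
        unfolding hb_good_def
      proof (intro conjI allI impI)
        fix x y1 y2 assume "(x, y1) \<in> \<Union>C" "(x, y2) \<in> \<Union>C"
        then obtain X Y where "X \<in> C" "Y \<in> C" "(x,y1) \<in> X" "(x,y2)\<in>Y" by blast
        then show "y1 = y2" using ch gC unfolding hb_good_def by (metis subsetD)
      next
        fix x y u v assume "(x, y) \<in> \<Union>C" "(u, v) \<in> \<Union>C"
        then obtain X Y where XY: "X \<in> C" "Y \<in> C" "(x,y) \<in> X" "(u,v)\<in>Y" by blast
        show "(x + u, y + v) \<in> \<Union>C"
        proof (cases "X \<subseteq> Y")
          case True
          then have "(x + u, y + v) \<in> Y" using XY gC[OF XY(2)] unfolding hb_good_def by blast
          then show ?thesis using XY by blast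
        next
          case False
          then have "Y \<subseteq> X" using ch[OF XY(1,2)] by blast
          then have "(x + u, y + v) \<in> X" using XY gC[OF XY(1)] unfolding hb_good_def by blast
          then show ?thesis using XY by blast
        qed
      next
        fix x y c assume "(x, y) \<in> \<Union>C"
        then show "(c *\<^sub>R x, c * y) \<in> \<Union>C" using gC unfolding hb_good_def by blast
      next
        fix x y assume "(x, y) \<in> \<Union>C"
        then show "y \<le> norm x" using gC unfolding hb_good_def by blast
      next
        show "(z, norm z) \<in> \<Union>C" using G1 gC unfolding hb_good_def by blast
      qed
      then show ?thesis using A_def by blast
    qed
  qed
  from Zorn_Lemma2[OF this] obtain M where M: "M \<in> A" and mx: "\<And>X. X \<in> A \<Longrightarrow> M \<subseteq> X \<Longrightarrow> X = M" by blast
  have gM: "hb_good z M" using M A_def by blast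
  have dom: "x \<in> fst ` M" for x
  proof (rule ccontr)
    assume "x \<notin> fst ` M"
    from hb_extend[OF gM this] obtain M' where "hb_good z M'" "M \<subseteq> M'" "M' \<noteq> M" by blast
    then show False using mx A_def by blast
  qed
  have sv: "\<And>x y1 y2. (x,y1)\<in>M \<Longrightarrow> (x,y2)\<in>M \<Longrightarrow> y1=y2"
    and ad: "\<And>x y u v. (x,y)\<in>M \<Longrightarrow> (u,v)\<in>M \<Longrightarrow> (x+u, y+v) \<in> M"
    and sc: "\<And>x y c. (x,y)\<in>M \<Longrightarrow> (c *\<^sub>R x, c*y) \<in> M"
    and dm: "\<And>x y. (x,y)\<in>M \<Longrightarrow> y \<le> norm x"
    and zM: "(z, norm z) \<in> M" using gM unfolding hb_good_def by blast+
  define f where "f x = (THE y. (x,y) \<in> M)" for x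
  have fM: "(x, f x) \<in> M" for x
  proof -
    obtain y where "(x,y) \<in> M" using dom[of x] by force
    then show ?thesis unfolding f_def by (metis (mono_tags) sv theI)
  qed
  have fe: "(x, y) \<in> M \<Longrightarrow> f x = y" for x y using sv fM by blast
  have fadd: "f (x + u) = f x + f u" for x u using fe[OF ad[OF fM fM]] .
  have fsc: "f (c *\<^sub>R x) = c * f x" for c x using fe[OF sc[OF fM]] .
  have fb: "\<bar>f x\<bar> \<le> norm x" for x
  proof -
    have "f x \<le> norm x" using dm[OF fM] .
    moreover have "f ((-1) *\<^sub>R x) \<le> norm ((-1) *\<^sub>R x)" using dm[OF fM] .
    ultimately show ?thesis using fsc[of "-1" x] by simp
  qed
  have "bounded_linear f"
    by (rule bounded_linear_intro[of _ 1]) (auto simp: fadd fsc fb)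
  moreover have "f z = norm z" using fe[OF zM] .
  ultimately show ?thesis using fb by blast
qed

lemma scaleC_zero_left [simp]: "scaleC 0 (x::'a::complex_banach) = 0"
  using scaleC_of_real[of 0 x] by simp
lemma scaleC_one [simp]: "scaleC 1 (x::'a::complex_banach) = x"
  using scaleC_of_real[of 1 x] by simp
lemma scaleC_zero_right [simp]: "scaleC c (0::'a::complex_banach) = 0"
  using scaleC_add_right[of c 0 0] by simp
lemma scaleC_diff_right: "scaleC c ((x::'a::complex_banach) - y) = scaleC c x - scaleC c y"
  using scaleC_add_right[of c "x - y" y] by (simp add: eq_diff_eq)
lemma scaleC_scaleR: "scaleC c (r *\<^sub>R (x::'a::complex_banach)) = r *\<^sub>R scaleC c x"
  by (metis scaleC_of_real scaleC_scaleC mult.commute)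
lemma bounded_linear_scaleC: "bounded_linear (scaleC c :: 'a::complex_banach \<Rightarrow> 'a)"
  by (rule bounded_linear_intro[of _ "cmod c"]) (auto simp: scaleC_add_right scaleC_scaleR norm_scaleC)

lemma vd_right_quot:
  fixes f :: "real \<Rightarrow> 'b::real_normed_vector"
  assumes "(f has_vector_derivative v) (at x within {x..b})" "x < b"
  shows "((\<lambda>h. (1/h) *\<^sub>R (f (x+h) - f x)) \<longlongrightarrow> v) (at_right 0)"
proof -
  have "((\<lambda>y. (1 / norm (y - x)) *\<^sub>R (f y - (f x + (y - x) *\<^sub>R v))) \<longlongrightarrow> 0) (at_right x)"
    using assms unfolding has_vector_derivative_def has_derivative_within at_within_Icc_at_right[OF assms(2)]
    by blast
  then have "((\<lambda>h. (1 / norm (h + x - x)) *\<^sub>R (f (h + x) - (f x + (h + x - x) *\<^sub>R v))) \<longlongrightarrow> 0) (at_right 0)"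
    unfolding at_right_to_0[of x] by (simp add: filterlim_filtermap)
  then have "((\<lambda>h. (1 / norm (h + x - x)) *\<^sub>R (f (h + x) - (f x + (h + x - x) *\<^sub>R v)) + v) \<longlongrightarrow> 0 + v) (at_right 0)"
    by (intro tendsto_add tendsto_const)
  moreover have "\<forall>\<^sub>F h in at_right 0. (1 / norm (h + x - x)) *\<^sub>R (f (h + x) - (f x + (h + x - x) *\<^sub>R v)) + v
       = (1/h) *\<^sub>R (f (x+h) - f x)"
    unfolding eventually_at_right_field
    by (intro exI[of _ 1]) (auto simp: algebra_simps)
  ultimately show ?thesis by (simp add: tendsto_cong)
qed

locale sg =
  fixes T :: "real \<Rightarrow> 'a::complex_banach \<Rightarrow> 'a"
  assumes c0: "c0_semigroup T"
begin

lemma bl: "t \<ge> 0 \<Longrightarrow> bounded_linear (T t)"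
  using c0 unfolding c0_semigroup_def bounded_clinear_op_def by blast
lemma clin: "t \<ge> 0 \<Longrightarrow> T t (scaleC c x) = scaleC c (T t x)"
  using c0 unfolding c0_semigroup_def bounded_clinear_op_def by blast
lemma T0 [simp]: "T 0 x = x"
  using c0 unfolding c0_semigroup_def by simp
lemma Tadd: "s \<ge> 0 \<Longrightarrow> t \<ge> 0 \<Longrightarrow> T (s + t) x = T s (T t x)"
  using c0 unfolding c0_semigroup_def by (metis comp_apply)
lemma Tcomm: "s \<ge> 0 \<Longrightarrow> t \<ge> 0 \<Longrightarrow> T s (T t x) = T t (T s x)"
  by (metis Tadd add.commute)
lemma sc0: "((\<lambda>t. T t x) \<longlongrightarrow> x) (at_right 0)"
  using c0 unfolding c0_semigroup_def by blast
lemma Tdiff: "t \<ge> 0 \<Longrightarrow> T t (x - y) = T t x - T t y"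
  using bl linear_simps by blast
lemma Tplus: "t \<ge> 0 \<Longrightarrow> T t (x + y) = T t x + T t y"
  using bl linear_simps by blast
lemma TscaleR: "t \<ge> 0 \<Longrightarrow> T t (r *\<^sub>R x) = r *\<^sub>R T t x"
  using bl linear_simps by blast
lemma Tzero: "t \<ge> 0 \<Longrightarrow> T t 0 = 0"
  using bl linear_simps by blast

lemma local_bound: "\<exists>\<delta>>0. \<exists>M\<ge>1. \<forall>t\<in>{0..\<delta>}. \<forall>x. norm (T t x) \<le> M * norm x"
proof (rule ccontr)
  assume na: "\<not> ?thesis"
  have "\<forall>n::nat. \<exists>t. t \<in> {0<..1/(real n + 1)} \<and> (\<exists>x. norm (T t x) > (real n + 1) * norm x)"
  proof
    fix n :: nat
    have "\<exists>t\<in>{0..1/(real n + 1)}. \<exists>x. norm (T t x) > (real n + 1) * norm x"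
      using na[simplified, rule_format, of "1/(real n + 1)" "real n + 1"] by (simp add: not_le)
    then obtain t x where tx: "t\<in>{0..1/(real n + 1)}" "norm (T t x) > (real n + 1) * norm x" by blast
    have "t \<noteq> 0"
    proof
      assume "t = 0"
      then have "norm x > (real n + 1) * norm x" using tx by simp
      moreover have "norm x \<le> (real n + 1) * norm x" by (simp add: mult_le_cancel_right1)
      ultimately show False by simp
    qed
    then show "\<exists>t. t \<in> {0<..1/(real n + 1)} \<and> (\<exists>x. norm (T t x) > (real n + 1) * norm x)"
      using tx \<open>t \<noteq> 0\<close> by (intro exI[of _ t]) auto
  qed
  then obtain t where t: "\<And>n. t n \<in> {0<..1/(real n + 1)}" "\<And>n. \<exists>x. norm (T (t n) x) > (real n + 1) * norm x"
    by metis
  have tlim: "filterlim t (at_right 0) sequentially"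
  proof -
    have "t \<longlonglongrightarrow> 0"
    proof (rule tendsto_sandwich[of "\<lambda>_. 0" _ _ "\<lambda>n. 1/(real n + 1)"])
      show "\<forall>\<^sub>F n in sequentially. 0 \<le> t n" using t(1) by (simp add: less_imp_le)
      show "\<forall>\<^sub>F n in sequentially. t n \<le> 1 / (real n + 1)" using t(1) by simp
      show "(\<lambda>n. 1 / (real n + 1)) \<longlonglongrightarrow> 0" using LIMSEQ_inverse_real_of_nat by (simp add: inverse_eq_divide add.commute)
    qed simp
    moreover have "\<forall>\<^sub>F n in sequentially. t n \<in> {0<..} \<and> t n \<noteq> 0" using t(1) by (simp add: less_imp_neq[symmetric] less_imp_neq)
    ultimately show ?thesis by (simp add: filterlim_at)
  qed
  have pb: "\<exists>B. \<forall>n. norm (T (t n) x) \<le> B" for x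
  proof -
    have "(\<lambda>n. T (t n) x) \<longlonglongrightarrow> x" using filterlim_compose[OF sc0 tlim] .
    then have "Bseq (\<lambda>n. T (t n) x)" by (rule convergent_imp_Bseq[OF convergentI])
    then show ?thesis unfolding Bseq_def by (meson less_imp_le)
  qed
  have "\<And>n. bounded_linear (T (t n))" using t(1) bl by (simp add: less_imp_le)
  from ubp[OF this pb] obtain C where C: "\<And>n x. norm (T (t n) x) \<le> C * norm x" by blast
  obtain n :: nat where n: "real n \<ge> C" using real_arch_simple by blast
  obtain x where x: "norm (T (t n) x) > (real n + 1) * norm x" using t(2) by blast
  have "C * norm x \<le> (real n + 1) * norm x" using n by (intro mult_right_mono) auto
  then show False using C[of n x] x by simp
qed

end

context sg begin

abbreviation "quot x h \<equiv> (1/h) *\<^sub>R (T h x - x)"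

lemma gen_lim: "x \<in> gen_dom T \<Longrightarrow> ((\<lambda>h. quot x h) \<longlongrightarrow> generator T x) (at_right 0)"
  unfolding gen_dom_def generator_def
  by (auto intro: tendsto_Lim[THEN sym, THEN subst] simp: trivial_limit_at_right_real)

lemma gen_intro: "((\<lambda>h. quot x h) \<longlongrightarrow> y) (at_right 0) \<Longrightarrow> x \<in> gen_dom T \<and> generator T x = y"
  unfolding gen_dom_def generator_def
  using tendsto_Lim trivial_limit_at_right_real by blast

lemma ev_pos: "\<forall>\<^sub>F h in at_right (0::real). h > 0"
  by (simp add: eventually_at_right_less)

lemma gen_add: assumes "x \<in> gen_dom T" "y \<in> gen_dom T"
  shows "x + y \<in> gen_dom T \<and> generator T (x + y) = generator T x + generator T y"
proof (rule gen_intro)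
  have "((\<lambda>h. quot x h + quot y h) \<longlongrightarrow> generator T x + generator T y) (at_right 0)"
    by (intro tendsto_add gen_lim assms)
  moreover have "\<forall>\<^sub>F h in at_right 0. quot x h + quot y h = quot (x + y) h"
    using ev_pos by eventually_elim (simp add: Tplus algebra_simps)
  ultimately show "((\<lambda>h. quot (x + y) h) \<longlongrightarrow> generator T x + generator T y) (at_right 0)"
    by (rule Lim_transform_eventually)
qed

lemma gen_scaleC: assumes "x \<in> gen_dom T"
  shows "scaleC c x \<in> gen_dom T \<and> generator T (scaleC c x) = scaleC c (generator T x)"
proof (rule gen_intro)
  have "((\<lambda>h. scaleC c (quot x h)) \<longlongrightarrow> scaleC c (generator T x)) (at_right 0)"
    by (intro bounded_linear.tendsto[OF bounded_linear_scaleC] gen_lim assms)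
  moreover have "\<forall>\<^sub>F h in at_right 0. scaleC c (quot x h) = quot (scaleC c x) h"
    using ev_pos by eventually_elim (simp add: clin scaleC_scaleR scaleC_diff_right)
  ultimately show "((\<lambda>h. quot (scaleC c x) h) \<longlongrightarrow> scaleC c (generator T x)) (at_right 0)"
    by (rule Lim_transform_eventually)
qed

lemma gen_scaleR: assumes "x \<in> gen_dom T"
  shows "r *\<^sub>R x \<in> gen_dom T \<and> generator T (r *\<^sub>R x) = r *\<^sub>R (generator T x)"
  using gen_scaleC[OF assms, of "complex_of_real r"] by (simp add: scaleC_of_real)

lemma gen_diff: assumes "x \<in> gen_dom T" "y \<in> gen_dom T"
  shows "x - y \<in> gen_dom T \<and> generator T (x - y) = generator T x - generator T y"
proof -
  have "(-1) *\<^sub>R y \<in> gen_dom T" "generator T ((-1) *\<^sub>R y) = (-1) *\<^sub>R generator T y"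
    using gen_scaleR[OF assms(2), of "-1"] by auto
  then show ?thesis using gen_add[OF assms(1), of "(-1) *\<^sub>R y"] by simp
qed

end

locale sgb = sg +
  fixes \<delta> M :: real
  assumes dpos: "\<delta> > 0" and M1: "M \<ge> 1" and Mb: "\<And>t x. t \<in> {0..\<delta>} \<Longrightarrow> norm (T t x) \<le> M * norm x"
begin

lemma cont: "continuous_on {0..\<delta>} (\<lambda>r. T r z)"
  unfolding continuous_on_iff
proof (intro ballI allI impI)
  fix r e :: real assume r: "r \<in> {0..\<delta>}" and e: "e > 0"
  have "\<forall>\<^sub>F h in at_right 0. dist (T h z) z < e / M" using sc0 e M1 by (simp add: tendsto_iff)
  then obtain b where b: "b > 0" "\<And>h. 0 < h \<Longrightarrow> h < b \<Longrightarrow> dist (T h z) z < e / M"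
    unfolding eventually_at_right_field by auto
  show "\<exists>d>0. \<forall>x'\<in>{0..\<delta>}. dist x' r < d \<longrightarrow> dist (T x' z) (T r z) < e"
  proof (intro exI[of _ b] conjI ballI impI b)
    fix r' assume r': "r' \<in> {0..\<delta>}" "dist r' r < b"
    consider "r' = r" | "r < r'" | "r' < r" by linarith
    then show "dist (T r' z) (T r z) < e"
    proof cases
      case 1 then show ?thesis using e by simp
    next
      case 2
      have "T r' z = T r (T (r' - r) z)" using Tadd[of r "r' - r"] 2 r by simp
      then have "T r' z - T r z = T r (T (r' - r) z - z)" using Tdiff r by simp
      then have "norm (T r' z - T r z) \<le> M * norm (T (r' - r) z - z)" using Mb r by simp
      also have "\<dots> < M * (e / M)" using b(2)[of "r' - r"] 2 r' M1 by (intro mult_strict_left_mono) (auto simp: dist_norm dist_real_def)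
      finally show ?thesis using M1 by (simp add: dist_norm)
    next
      case 3
      have "T r z = T r' (T (r - r') z)" using Tadd[of r' "r - r'"] 3 r' by simp
      then have "T r' z - T r z = T r' (z - T (r - r') z)" using Tdiff r' by simp
      then have "norm (T r' z - T r z) \<le> M * norm (z - T (r - r') z)" using Mb r' by simp
      also have "\<dots> < M * (e / M)" using b(2)[of "r - r'"] 3 r' M1 by (intro mult_strict_left_mono) (auto simp: dist_norm dist_real_def norm_minus_commute)
      finally show ?thesis using M1 by (simp add: dist_norm)
    qed
  qed
qed

definition F :: "'a \<Rightarrow> real \<Rightarrow> 'a" where "F z u = integral {0..u} (\<lambda>r. T r z)"

lemma integrable: "0 \<le> a \<Longrightarrow> u \<le> \<delta> \<Longrightarrow> (\<lambda>r. T r z) integrable_on {a..u}"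
  by (intro integrable_continuous_real continuous_on_subset[OF cont]) auto

lemma F0 [simp]: "F z 0 = 0" by (simp add: F_def)

lemma FTC: "u \<in> {0..\<delta>} \<Longrightarrow> ((F z) has_vector_derivative T u z) (at u within {0..\<delta>})"
  unfolding F_def by (rule integral_has_vector_derivative[OF cont])

lemma Fshift: assumes "0 \<le> h" "0 \<le> s" "s + h \<le> \<delta>"
  shows "T h (F z s) = F z (s + h) - F z h"
proof -
  have "T h (F z s) = integral {0..s} (T h \<circ> (\<lambda>r. T r z))"
    unfolding F_def using assms by (intro integral_linear[symmetric] integrable bl) auto
  also have "\<dots> = integral {0..s} ((\<lambda>r. T r z) \<circ> (+) h)"
    by (rule integral_cong) (use assms in \<open>auto simp: Tadd\<close>)
  also have "\<dots> = integral {h..s+h} (\<lambda>r. T r z)"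
    by (subst integral_shift_Icc_real) (simp add: add.commute)
  also have "\<dots> = F z (s + h) - F z h"
    unfolding F_def using Henstock_Kurzweil_Integration.integral_combine[of 0 h "s+h" "\<lambda>r. T r z"] integrable[of 0 "s+h" z] assms
    by (simp add: algebra_simps)
  finally show ?thesis .
qed

lemma xdom: assumes "0 < s" "s < \<delta>"
  shows "(1/s) *\<^sub>R F z s \<in> gen_dom T \<and> generator T ((1/s) *\<^sub>R F z s) = (1/s) *\<^sub>R (T s z - z)"
proof (rule gen_intro)
  have d1: "((\<lambda>h. (1/h) *\<^sub>R (F z (s+h) - F z s)) \<longlongrightarrow> T s z) (at_right 0)"
    by (rule vd_right_quot[OF has_vector_derivative_within_subset[OF FTC] assms(2)]) (use assms in auto)
  have d0': "((\<lambda>h. (1/h) *\<^sub>R (F z (0+h) - F z 0)) \<longlongrightarrow> T 0 z) (at_right 0)"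
    by (rule vd_right_quot[OF has_vector_derivative_within_subset[OF FTC]]) (use assms in auto)
  then have d0: "((\<lambda>h. (1/h) *\<^sub>R (F z (0+h) - F z 0)) \<longlongrightarrow> z) (at_right 0)" by simp
  have "((\<lambda>h. (1/s) *\<^sub>R ((1/h) *\<^sub>R (F z (s+h) - F z s) - (1/h) *\<^sub>R (F z (0+h) - F z 0)))
      \<longlongrightarrow> (1/s) *\<^sub>R (T s z - z)) (at_right 0)"
    by (intro tendsto_scaleR tendsto_diff d1 d0 tendsto_const)
  moreover have "\<forall>\<^sub>F h in at_right 0. (1/s) *\<^sub>R ((1/h) *\<^sub>R (F z (s+h) - F z s) - (1/h) *\<^sub>R (F z (0+h) - F z 0))
      = quot ((1/s) *\<^sub>R F z s) h"
  proof -
    have "\<forall>\<^sub>F h in at_right 0. h > 0 \<and> h < \<delta> - s"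
      unfolding eventually_at_right_field using assms by (intro exI[of _ "\<delta> - s"]) auto
    then show ?thesis
    proof eventually_elim
      case (elim h)
      then have "T h (F z s) = F z (s + h) - F z h" using assms by (intro Fshift) auto
      then have e: "T h ((1/s) *\<^sub>R F z s) = (1/s) *\<^sub>R (F z (s+h) - F z h)" using elim by (simp add: TscaleR)
      show ?case unfolding e by (simp add: algebra_simps)
    qed
  qed
  ultimately show "((\<lambda>h. quot ((1/s) *\<^sub>R F z s) h) \<longlongrightarrow> (1/s) *\<^sub>R (T s z - z)) (at_right 0)"
    by (rule Lim_transform_eventually)
qed

lemma dens: "((\<lambda>s. (1/s) *\<^sub>R F z s) \<longlongrightarrow> z) (at_right 0)"
proof -
  have "((\<lambda>h. (1/h) *\<^sub>R (F z (0+h) - F z 0)) \<longlongrightarrow> T 0 z) (at_right 0)"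
    by (rule vd_right_quot[OF has_vector_derivative_within_subset[OF FTC]]) (use dpos in auto)
  then show ?thesis by simp
qed

lemma Fbound: assumes "0 \<le> s" "s \<le> \<delta>" "\<And>r. r \<in> {0..s} \<Longrightarrow> norm (T r z - z) \<le> e"
  shows "norm (F z s - s *\<^sub>R z) \<le> e * s"
proof -
  have "((\<lambda>r. T r z - z) has_integral (F z s - s *\<^sub>R z)) (cbox 0 s)"
  proof -
    have "((\<lambda>r. T r z - z) has_integral (integral {0..s} (\<lambda>r. T r z) - integral {0..s} (\<lambda>r. z))) {0..s}"
      using integrable[of 0 s z] assms by (intro has_integral_diff integrable_integral) auto
    then show ?thesis using assms by (simp add: F_def)
  qed
  moreover have "0 \<le> e" using assms(3)[of 0] assms by auto
  ultimately show ?thesis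
    using assms has_integral_bound[of e "\<lambda>r. T r z - z" "F z s - s *\<^sub>R z" 0 s] by auto
qed

lemma Fnorm: assumes "0 \<le> s" "s \<le> \<delta>"
  shows "norm (F z s) \<le> M * norm z * s"
proof -
  have "((\<lambda>r. T r z) has_integral F z s) (cbox 0 s)"
    using integrable[of 0 s z] assms unfolding F_def by auto
  then show ?thesis
    using assms M1 Mb has_integral_bound[of "M * norm z" "\<lambda>r. T r z" "F z s" 0 s] by auto
qed

lemma Fdiff: assumes "0 \<le> s" "s \<le> \<delta>" shows "F (y1 - y2) s = F y1 s - F y2 s"
proof -
  have "F (y1 - y2) s = integral {0..s} (\<lambda>r. T r y1 - T r y2)"
    unfolding F_def by (rule integral_cong) (simp add: Tdiff)
  also have "\<dots> = F y1 s - F y2 s" unfolding F_def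
    using integrable[of 0 s] assms by (intro integral_diff) auto
  finally show ?thesis .
qed

end

context sgb begin

lemma lemG:
  assumes D: "gen_dom T = UNIV"
  shows "bounded_linear (generator T) \<and> (\<exists>C\<ge>0. \<forall>h\<in>{0<..\<delta>}. \<forall>y. norm (T h y - y) \<le> C * h * norm y)"
proof -
  define G where "G h = (if 0 < h \<and> h \<le> \<delta> then (\<lambda>y. quot y h) else (\<lambda>y. 0))" for h
  have Gl: "bounded_linear (G h)" for h
  proof (cases "0 < h \<and> h \<le> \<delta>")
    case True
    then have "bounded_linear (\<lambda>y. (1/h) *\<^sub>R (T h y - y))"
      by (intro bounded_linear_compose[OF bounded_linear_scaleR_right] bounded_linear_sub bl bounded_linear_ident) auto
    then show ?thesis using True by (simp add: G_def)
  qed (auto simp: G_def bounded_linear_zero)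
  have pb: "\<exists>B. \<forall>h. norm (G h y) \<le> B" for y
  proof -
    have "\<forall>\<^sub>F h in at_right 0. dist (quot y h) (generator T y) < 1"
      using gen_lim[of y] D by (simp add: tendsto_iff)
    then obtain b where b: "b > 0" "\<And>h. 0 < h \<Longrightarrow> h < b \<Longrightarrow> dist (quot y h) (generator T y) < 1"
      unfolding eventually_at_right_field by auto
    define B where "B = max (norm (generator T y) + 1) ((M + 1) * norm y / b)"
    have "norm (G h y) \<le> B" for h
    proof (cases "0 < h \<and> h \<le> \<delta>")
      case True
      show ?thesis
      proof (cases "h < b")
        case True': True
        have "norm (quot y h) \<le> norm (generator T y) + 1"
          using b(2)[of h] True True' norm_triangle_ineq2[of "quot y h" "generator T y"] by (simp add: dist_norm)
        then show ?thesis using True by (simp add: G_def B_def)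
      next
        case False
        have "norm (T h y - y) \<le> (M + 1) * norm y"
          using norm_triangle_ineq4[of "T h y" y] Mb[of h y] True by (simp add: algebra_simps)
        moreover have "norm (quot y h) = norm (T h y - y) / h" using True by simp
        ultimately have "norm (quot y h) \<le> (M + 1) * norm y / h" using True by (simp add: divide_right_mono)
        also have "\<dots> \<le> (M + 1) * norm y / b" using False b M1 by (intro divide_left_mono) auto
        finally show ?thesis using True by (simp add: G_def B_def)
      qed
    next
      case False
      then have "G h y = 0" unfolding G_def by auto
      moreover have "0 \<le> B" by (simp add: B_def le_max_iff_disj)
      ultimately show ?thesis by simp
    qed
    then show ?thesis by blast
  qed
  from ubp[OF Gl pb] obtain C where C: "\<And>h y. norm (G h y) \<le> C * norm y" by blast
  define C' where "C' = max C 0"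
  have C': "norm (G h y) \<le> C' * norm y" for h y
  proof -
    have "C * norm y \<le> C' * norm y" unfolding C'_def by (intro mult_right_mono) auto
    then show ?thesis using C[of h y] by linarith
  qed
  have qb: "norm (quot y h) \<le> C' * norm y" if "0 < h" "h \<le> \<delta>" for h y
    using C'[of h y] that by (simp add: G_def)
  have lip: "norm (T h y - y) \<le> C' * h * norm y" if "h \<in> {0<..\<delta>}" for h y
  proof -
    have "norm (quot y h) \<le> C' * norm y" using qb that by simp
    moreover have "norm (quot y h) = norm (T h y - y) / h"
    proof -
      have "\<bar>1/h\<bar> = 1/h" using that by simp
      then show ?thesis by (simp only: norm_scaleR) simp
    qed
    ultimately have "norm (T h y - y) / h \<le> C' * norm y" by linarith
    then show ?thesis using that by (simp add: pos_divide_le_eq mult.commute mult.left_commute)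
  qed
  have bnd: "norm (generator T y) \<le> C' * norm y" for y
  proof (rule tendsto_le[OF trivial_limit_at_right_real tendsto_const])
    show "((\<lambda>h. norm (quot y h)) \<longlongrightarrow> norm (generator T y)) (at_right 0)"
      using gen_lim[of y] D by (intro tendsto_norm) auto
    have "\<forall>\<^sub>F h in at_right 0. 0 < h \<and> h < \<delta>"
      unfolding eventually_at_right_field using dpos by (intro exI[of _ \<delta>]) auto
    then show "\<forall>\<^sub>F h in at_right 0. norm (quot y h) \<le> C' * norm y"
      by eventually_elim (use qb in auto)
  qed
  have "bounded_linear (generator T)"
  proof (rule bounded_linear_intro[of _ C'])
    show "generator T (x + y) = generator T x + generator T y" for x y using gen_add D by blast
    show "generator T (r *\<^sub>R x) = r *\<^sub>R generator T x" for r x using gen_scaleR D by blast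
    show "norm (generator T x) \<le> norm x * C'" for x using bnd[of x] by (simp add: mult.commute)
  qed
  moreover have "C' \<ge> 0" by (simp add: C'_def)
  ultimately show ?thesis using lip by blast
qed

lemma dom_univ:
  assumes A: "\<And>y. y \<in> gen_dom T \<Longrightarrow> norm (generator T y) \<le> C * norm y"
  shows "gen_dom T = UNIV"
proof -
  define C' where "C' = max C 0"
  have A': "norm (generator T y) \<le> C' * norm y" if "y \<in> gen_dom T" for y
  proof -
    have "C * norm y \<le> C' * norm y" unfolding C'_def by (intro mult_right_mono) auto
    then show ?thesis using A[OF that] by linarith
  qed
  have lip: "norm (T s z - z) \<le> C' * M * s * norm z" if "0 < s" "s < \<delta>" for s z
  proof -
    have xd: "(1/s) *\<^sub>R F z s \<in> gen_dom T" and gx: "generator T ((1/s) *\<^sub>R F z s) = (1/s) *\<^sub>R (T s z - z)"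
      using xdom[OF that] by auto
    have e1: "norm ((1/s) *\<^sub>R (T s z - z)) \<le> C' * norm ((1/s) *\<^sub>R F z s)"
      using A'[OF xd] gx by simp
    have e2: "norm ((1/s) *\<^sub>R F z s) \<le> M * norm z"
    proof -
      have "norm (F z s) \<le> M * norm z * s" using Fnorm[of s z] that by simp
      then have "(1/s) * norm (F z s) \<le> (1/s) * (M * norm z * s)" using that by (intro mult_left_mono) auto
      then show ?thesis using that by simp
    qed
    have c0: "C' \<ge> 0" by (simp add: C'_def)
    have "norm ((1/s) *\<^sub>R (T s z - z)) \<le> C' * (M * norm z)"
      using e1 mult_left_mono[OF e2 c0] by linarith
    then have "(1/s) * norm (T s z - z) \<le> C' * (M * norm z)" using that by simp
    then have "(1/s) * norm (T s z - z) * s \<le> C' * (M * norm z) * s" using that by (intro mult_right_mono) auto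
    then show ?thesis using that by (simp add: algebra_simps)
  qed
  define s0 where "s0 = min (\<delta>/2) (1 / (2 * (C' * M + 1)))"
  have CM: "C' * M \<ge> 0" using M1 by (simp add: C'_def)
  have s0: "0 < s0" "s0 < \<delta>" "C' * M * s0 \<le> 1/2"
  proof -
    show "0 < s0" using dpos CM by (simp add: s0_def)
    show "s0 < \<delta>" using dpos by (simp add: s0_def)
    have "s0 \<le> 1 / (2 * (C' * M + 1))" by (simp add: s0_def)
    then have "C' * M * s0 \<le> C' * M * (1 / (2 * (C' * M + 1)))" using CM by (intro mult_left_mono) auto
    also have "\<dots> \<le> 1/2" using CM by (simp add: field_simps)
    finally show "C' * M * s0 \<le> 1/2" .
  qed
  have small: "norm (T r z - z) \<le> norm z / 2" if "r \<in> {0..s0}" for r z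
  proof (cases "r = 0")
    case False
    then have "norm (T r z - z) \<le> C' * M * r * norm z" using lip[of r z] that s0 by auto
    also have "\<dots> \<le> C' * M * s0 * norm z" using that CM by (intro mult_right_mono mult_left_mono) auto
    also have "\<dots> \<le> 1/2 * norm z" using s0 by (intro mult_right_mono) auto
    finally show ?thesis by simp
  qed simp
  define V where "V y = (1/s0) *\<^sub>R F y s0" for y
  have Vc: "norm (V y - y) \<le> norm y / 2" for y
  proof -
    have "norm (F y s0 - s0 *\<^sub>R y) \<le> norm y / 2 * s0"
      using s0 by (intro Fbound small) auto
    moreover have "V y - y = (1/s0) *\<^sub>R (F y s0 - s0 *\<^sub>R y)" using s0 by (simp add: V_def algebra_simps)
    then have "norm (V y - y) = norm (F y s0 - s0 *\<^sub>R y) / s0" using s0 by simp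
    ultimately show ?thesis using s0 by (simp add: pos_divide_le_eq)
  qed
  have Vd: "V (y1 - y2) = V y1 - V y2" for y1 y2
    using s0 unfolding V_def by (subst Fdiff) (auto simp: scaleR_diff_right)
  show ?thesis
  proof (intro set_eqI iffI UNIV_I)
    fix z
    define \<Phi> where "\<Phi> y = z + y - V y" for y
    have "\<forall>x y. dist (\<Phi> x) (\<Phi> y) \<le> 1/2 * dist x y"
    proof (intro allI)
      fix x y
      have "\<Phi> x - \<Phi> y = - (V (x - y) - (x - y))" by (simp add: \<Phi>_def Vd algebra_simps)
      then show "dist (\<Phi> x) (\<Phi> y) \<le> 1/2 * dist x y" using Vc[of "x - y"] by (simp add: dist_norm norm_minus_commute)
    qed
    from banach_fix_type[OF _ _ this] obtain y where "\<Phi> y = y" by auto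
    then have "V y = z" by (simp add: \<Phi>_def)
    then show "z \<in> gen_dom T" using xdom[OF s0(1,2), of y] by (simp add: V_def)
  qed
qed

end

lemma cnorm_hom: "is_cnorm n \<Longrightarrow> n (scaleC c x) = cmod c * n x"
  unfolding is_cnorm_def by blast
lemma cnorm_zero: "is_cnorm n \<Longrightarrow> n 0 = 0"
  using cnorm_hom[of n 0 0] by simp
lemma cnorm_scaleR: "is_cnorm n \<Longrightarrow> n (r *\<^sub>R x) = \<bar>r\<bar> * n x"
  using cnorm_hom[of n "complex_of_real r" x] by (simp add: scaleC_of_real)
lemma cnorm_tri: "is_cnorm n \<Longrightarrow> n (x + y) \<le> n x + n y"
  unfolding is_cnorm_def by blast

lemma equiv_normE:
  assumes "equiv_norm n"
  obtains a b where "a > 0" "b > 0" "\<And>x. a * norm x \<le> n x" "\<And>x. n x \<le> b * norm x" "is_cnorm n"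
  using assms unfolding equiv_norm_def by blast

context sg begin

lemma opnorm_bdd:
  assumes "equiv_norm n" "t \<ge> 0"
  shows "bdd_above ((\<lambda>x. n (T t x)) ` {x. n x \<le> 1})"
proof -
  obtain a b where ab: "a > 0" "b > 0" "\<And>x. a * norm x \<le> n x" "\<And>x. n x \<le> b * norm x"
    using equiv_normE[OF assms(1)] by metis
  have "n (T t x) \<le> b * onorm (T t) / a" if "n x \<le> 1" for x
  proof -
    have "norm x \<le> 1 / a" using ab(3)[of x] that ab(1) by (simp add: field_simps)
    have "n (T t x) \<le> b * norm (T t x)" by (rule ab(4))
    also have "\<dots> \<le> b * (onorm (T t) * norm x)" using onorm[OF bl[OF assms(2)]] ab(2) by (intro mult_left_mono) auto
    also have "\<dots> \<le> b * (onorm (T t) * (1 / a))"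
      using \<open>norm x \<le> 1 / a\<close> onorm_pos_le[OF bl[OF assms(2)]] ab(2) by (intro mult_left_mono) auto
    finally show ?thesis by simp
  qed
  then show ?thesis unfolding bdd_above_def by blast
qed

end

context sgb begin

lemma forward:
  assumes gb: "generator_bounded T" and en: "equiv_norm n"
  shows "\<exists>l. \<forall>t\<ge>0. opnorm_wrt n (T t) \<le> exp (l * t)"
proof -
  have cn: "is_cnorm n" using en unfolding equiv_norm_def by (rule conjunct1)
  have "\<exists>a>0. \<exists>b>0. \<forall>x. a * norm x \<le> n x \<and> n x \<le> b * norm x" using en unfolding equiv_norm_def by (rule conjunct2)
  then obtain a b where ab: "a > 0" "b > 0" "\<And>x. a * norm x \<le> n x" "\<And>x. n x \<le> b * norm x" by blast
  have D: "gen_dom T = UNIV" using gb unfolding generator_bounded_def by blast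
  obtain C where C: "C \<ge> 0" "\<And>h y. h \<in> {0<..\<delta>} \<Longrightarrow> norm (T h y - y) \<le> C * h * norm y"
  proof -
    have "\<exists>C\<ge>0. \<forall>h\<in>{0<..\<delta>}. \<forall>y. norm (T h y - y) \<le> C * h * norm y" using lemG[OF D] by (rule conjunct2)
    then show ?thesis using that by auto
  qed
  define L where "L = b * C / a"
  have L0: "L \<ge> 0" using ab C by (simp add: L_def)
  have step: "n (T h y) \<le> (1 + L * h) * n y" if "h \<in> {0..\<delta>}" for h y
  proof (cases "h = 0")
    case True then show ?thesis by simp
  next
    case False
    then have h: "h \<in> {0<..\<delta>}" using that by auto
    have "n (T h y) = n (y + (T h y - y))" by simp
    also have "\<dots> \<le> n y + n (T h y - y)" by (rule cnorm_tri[OF cn])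
    also have "n (T h y - y) \<le> b * norm (T h y - y)" by (rule ab(4))
    also have "\<dots> \<le> b * (C * h * norm y)" using C(2)[OF h] ab by (intro mult_left_mono) auto
    also have "\<dots> = L * h * (a * norm y)" using ab by (simp add: L_def field_simps)
    also have "\<dots> \<le> L * h * n y" using ab(3)[of y] L0 h by (intro mult_left_mono) auto
    finally show ?thesis by (simp add: algebra_simps)
  qed
  have iter: "n (T (real k * h) y) \<le> (1 + L * h) ^ k * n y" if "h \<in> {0..\<delta>}" for k h y
  proof (induction k arbitrary: y)
    case 0 then show ?case by simp
  next
    case (Suc k)
    have "T (real (Suc k) * h) y = T h (T (real k * h) y)"
      using Tadd[of h "real k * h" y] that by (simp add: algebra_simps)
    then have "n (T (real (Suc k) * h) y) \<le> (1 + L * h) * n (T (real k * h) y)"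
      using step[OF that] by simp
    also have "\<dots> \<le> (1 + L * h) * ((1 + L * h) ^ k * n y)"
      using Suc L0 that by (intro mult_left_mono) auto
    finally show ?case by simp
  qed
  have main: "n (T t x) \<le> exp (L * t) * n x" if "t \<ge> 0" for t x
  proof -
    define N where "N = nat \<lceil>t / \<delta>\<rceil> + 1"
    have N: "real N \<ge> t / \<delta>" "N \<ge> 1" unfolding N_def by linarith+
    define h where "h = t / real N"
    have hd: "h \<in> {0..\<delta>}"
    proof -
      have "t \<le> \<delta> * real N" using N(1) dpos by (simp add: field_simps)
      then show ?thesis using that N(2) dpos by (simp add: h_def field_simps)
    qed
    have tN: "t = real N * h" using N(2) by (simp add: h_def)
    have "0 \<le> a * norm x" using ab(1) by simp
    then have nx: "n x \<ge> 0" using ab(3)[of x] by linarith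
    have e1: "n (T t x) \<le> (1 + L * h) ^ N * n x" using iter[OF hd, of N x] tN by simp
    have e2: "(1 + L * h) ^ N \<le> exp (L * h) ^ N"
      using L0 hd by (intro power_mono) auto
    have e3: "exp (L * h) ^ N = exp (L * t)" using tN by (simp add: exp_of_nat_mult[symmetric] algebra_simps)
    have "(1 + L * h) ^ N * n x \<le> exp (L * h) ^ N * n x" using mult_right_mono[OF e2 nx] .
    then have "(1 + L * h) ^ N * n x \<le> exp (L * t) * n x" unfolding e3 .
    then show ?thesis using e1 by linarith
  qed
  have "opnorm_wrt n (T t) \<le> exp (L * t)" if "t \<ge> 0" for t
    unfolding opnorm_wrt_def
  proof (rule cSup_least)
    have "0 \<in> {x. n x \<le> 1}" using cnorm_zero[OF cn] by simp
    then show "(\<lambda>x. n (T t x)) ` {x. n x \<le> 1} \<noteq> {}" by (metis empty_iff image_eqI)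
  next
    fix v assume "v \<in> (\<lambda>x. n (T t x)) ` {x. n x \<le> 1}"
    then obtain x where x0: "x \<in> {x. n x \<le> 1}" and xv: "v = n (T t x)" by (rule imageE)
    from x0 have x: "n x \<le> 1" by simp
    have "v \<le> exp (L * t) * n x" using main[OF that] xv by simp
    also have "\<dots> \<le> exp (L * t) * 1" using x by (intro mult_left_mono) auto
    finally show "v \<le> exp (L * t)" by simp
  qed
  then show ?thesis by blast
qed

end

definition fC :: "('a::complex_banach \<Rightarrow> real) \<Rightarrow> 'a \<Rightarrow> complex" where
  "fC f x = Complex (f x) (- f (scaleC \<i> x))"

lemma scaleC_Complex: "scaleC (Complex a b) (x::'a::complex_banach) = a *\<^sub>R x + b *\<^sub>R scaleC \<i> x"
proof -
  have "scaleC (Complex a b) x = scaleC (complex_of_real a) x + scaleC (\<i> * complex_of_real b) x"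
    by (simp add: Complex_eq scaleC_add_left)
  also have "scaleC (\<i> * complex_of_real b) x = scaleC \<i> (b *\<^sub>R x)"
    by (simp add: scaleC_scaleC scaleC_of_real[symmetric])
  finally show ?thesis by (simp add: scaleC_of_real scaleC_scaleR)
qed

lemma scaleC_ii: "scaleC \<i> (scaleC \<i> (x::'a::complex_banach)) = - x"
proof -
  have "scaleC \<i> (scaleC \<i> x) = scaleC (complex_of_real (-1)) x" by (simp only: scaleC_scaleC) simp
  then show ?thesis using scaleC_of_real[of "-1" x] by simp
qed

context
  fixes f :: "'a::complex_banach \<Rightarrow> real"
  assumes fl: "bounded_linear f"
begin

lemma Re_fC [simp]: "Re (fC f x) = f x" by (simp add: fC_def)

lemma fC_add: "fC f (x + y) = fC f x + fC f y"
  using linear_simps[OF fl] by (simp add: fC_def scaleC_add_right complex_eq_iff)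

lemma fC_diff: "fC f (x - y) = fC f x - fC f y"
  using linear_simps[OF fl] by (simp add: fC_def scaleC_diff_right complex_eq_iff)

lemma fC_scaleC: "fC f (scaleC c x) = c * fC f x"
proof (cases c)
  case (Complex a b)
  have e1: "f (scaleC c x) = a * f x + b * f (scaleC \<i> x)"
    unfolding Complex scaleC_Complex using linear_simps[OF fl] by simp
  have "scaleC \<i> (scaleC c x) = a *\<^sub>R scaleC \<i> x - b *\<^sub>R x"
    unfolding Complex scaleC_Complex by (simp add: scaleC_add_right scaleC_scaleR scaleC_ii)
  then have e2: "f (scaleC \<i> (scaleC c x)) = a * f (scaleC \<i> x) - b * f x"
    using linear_simps[OF fl] by simp
  show ?thesis unfolding fC_def e1 e2 by (simp add: Complex complex_eq_iff algebra_simps)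
qed

lemma fC_bound: assumes B: "\<And>x. \<bar>f x\<bar> \<le> B * norm x"
  shows "cmod (fC f x) \<le> 2 * B * norm x"
proof -
  have "cmod (fC f x) \<le> \<bar>f x\<bar> + \<bar>f (scaleC \<i> x)\<bar>" using cmod_le[of "fC f x"] by (simp add: fC_def)
  also have "\<dots> \<le> B * norm x + B * norm (scaleC \<i> x)" using B by (intro add_mono) auto
  also have "norm (scaleC \<i> x) = norm x" by (simp add: norm_scaleC)
  finally show ?thesis by simp
qed

end

context sgb begin

lemma gen_zero: "0 \<in> gen_dom T \<and> generator T 0 = 0"
proof (rule gen_intro)
  have "\<forall>\<^sub>F h in at_right 0. 0 = quot 0 h" using ev_pos by eventually_elim (simp add: Tzero)
  then show "((\<lambda>h. quot 0 h) \<longlongrightarrow> 0) (at_right 0)" by (rule Lim_transform_eventually[OF tendsto_const])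
qed

lemma bad_functional:
  assumes nD: "gen_dom T \<noteq> UNIV"
  shows "\<exists>f::'a \<Rightarrow> real. bounded_linear f \<and> (\<forall>N. \<exists>y\<in>gen_dom T. norm y \<le> 1 \<and> \<bar>f (generator T y)\<bar> > N)"
proof (rule ccontr)
  assume na: "\<not> ?thesis"
  have nb: "\<exists>N. \<forall>y\<in>gen_dom T. norm y \<le> 1 \<longrightarrow> \<bar>f (generator T y)\<bar> \<le> N" if "bounded_linear f" for f :: "'a \<Rightarrow> real"
  proof (rule ccontr)
    assume nn: "\<not> ?thesis"
    have "\<forall>N. \<exists>y\<in>gen_dom T. norm y \<le> 1 \<and> \<bar>f (generator T y)\<bar> > N"
    proof
      fix N
      from nn obtain y where "y \<in> gen_dom T" "norm y \<le> 1" "\<not> \<bar>f (generator T y)\<bar> \<le> N" by blast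
      then show "\<exists>y\<in>gen_dom T. norm y \<le> 1 \<and> \<bar>f (generator T y)\<bar> > N" by (intro bexI[of _ y]) auto
    qed
    then show False using na that by blast
  qed
  define \<Phi> :: "'a \<Rightarrow> ('a \<Rightarrow>\<^sub>L real) \<Rightarrow> real" where
    "\<Phi> y = (if y \<in> gen_dom T \<and> norm y \<le> 1 then (\<lambda>\<phi>. blinfun_apply \<phi> (generator T y)) else (\<lambda>\<phi>. 0))" for y
  have \<Phi>l: "bounded_linear (\<Phi> y)" for y
    unfolding \<Phi>_def by (auto simp: blinfun.bounded_linear_left bounded_linear_zero)
  have \<Phi>b: "\<exists>B. \<forall>y. norm (\<Phi> y \<phi>) \<le> B" for \<phi>
  proof -
    obtain N where N: "\<forall>y\<in>gen_dom T. norm y \<le> 1 \<longrightarrow> \<bar>blinfun_apply \<phi> (generator T y)\<bar> \<le> N"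
      using nb[OF blinfun.bounded_linear_right] by blast
    have "norm (\<Phi> y \<phi>) \<le> max N 0" for y
      using N by (auto simp: \<Phi>_def le_max_iff_disj)
    then show ?thesis by blast
  qed
  from ubp[OF \<Phi>l \<Phi>b] obtain C where C: "\<And>y \<phi>. norm (\<Phi> y \<phi>) \<le> C * norm \<phi>" by blast
  define C' where "C' = max C 0"
  have unit: "norm (generator T y) \<le> C'" if "y \<in> gen_dom T" "norm y \<le> 1" for y
  proof -
    obtain g where g: "bounded_linear g" "\<And>x. \<bar>g x\<bar> \<le> norm x" "g (generator T y) = norm (generator T y)"
      using hahn_banach_norming[of "generator T y"] by blast
    define \<phi> where "\<phi> = Blinfun g"
    have ap: "blinfun_apply \<phi> = g" unfolding \<phi>_def by (rule bounded_linear_Blinfun_apply[OF g(1)])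
    have n\<phi>: "norm \<phi> \<le> 1" by (rule norm_blinfun_bound) (use g(2) ap in auto)
    have "norm (generator T y) = \<Phi> y \<phi>" using that ap g(3) by (simp add: \<Phi>_def)
    also have "\<dots> \<le> norm (\<Phi> y \<phi>)" by simp
    also have "\<dots> \<le> C * norm \<phi>" by (rule C)
    also have "\<dots> \<le> C' * norm \<phi>" unfolding C'_def by (intro mult_right_mono) auto
    also have "\<dots> \<le> C' * 1" using n\<phi> unfolding C'_def by (intro mult_left_mono) auto
    finally show ?thesis by simp
  qed
  have "norm (generator T y) \<le> C' * norm y" if "y \<in> gen_dom T" for y
  proof (cases "y = 0")
    case True then show ?thesis using gen_zero by simp
  next
    case False
    define y' where "y' = (1 / norm y) *\<^sub>R y"
    have y': "y' \<in> gen_dom T" "generator T y' = (1 / norm y) *\<^sub>R generator T y"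
      using gen_scaleR[OF that] unfolding y'_def by auto
    have "norm y' \<le> 1" using False by (simp add: y'_def)
    then have "norm ((1 / norm y) *\<^sub>R generator T y) \<le> C'" using unit[OF y'(1)] y'(2) by simp
    then have "norm (generator T y) / norm y \<le> C'" by simp
    then show ?thesis using False by (simp add: pos_divide_le_eq mult.commute)
  qed
  then have "gen_dom T = UNIV" by (rule dom_univ)
  then show False using nD by simp
qed

end

context sgb begin

lemma backward:
  assumes H: "\<forall>n. equiv_norm n \<longrightarrow> (\<exists>l::real. \<forall>t\<ge>0. opnorm_wrt n (T t) \<le> exp (l * t))"
  shows "generator_bounded T"
proof (rule ccontr)
  assume ngb: "\<not> generator_bounded T"
  have nD: "gen_dom T \<noteq> UNIV"
  proof
    assume D: "gen_dom T = UNIV"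
    then have "bounded_linear (generator T)" using lemG by blast
    then show False using ngb D unfolding generator_bounded_def by blast
  qed
  obtain f :: "'a \<Rightarrow> real" where fl: "bounded_linear f"
    and fu: "\<And>N. \<exists>y\<in>gen_dom T. norm y \<le> 1 \<and> \<bar>f (generator T y)\<bar> > N"
    using bad_functional[OF nD] by blast
  obtain B where B: "B > 0" "\<And>x. \<bar>f x\<bar> \<le> B * norm x"
  proof -
    obtain K where "K > 0" "\<And>x. norm (f x) \<le> norm x * K" using bounded_linear.pos_bounded[OF fl] by blast
    then show ?thesis using that[of K] by (simp add: mult.commute)
  qed
  obtain z where z: "f z \<noteq> 0"
  proof -
    obtain y where "\<bar>f (generator T y)\<bar> > 0" using fu[of 0] by blast
    then show ?thesis using that by fastforce
  qed
  have "((\<lambda>s. f ((1/s) *\<^sub>R F z s)) \<longlongrightarrow> f z) (at_right 0)"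
    using bounded_linear.tendsto[OF fl dens] .
  then have ev1: "\<forall>\<^sub>F s in at_right 0. f ((1/s) *\<^sub>R F z s) \<noteq> 0" using z by (rule tendsto_imp_eventually_ne)
  have ev2: "\<forall>\<^sub>F s in at_right 0. 0 < s \<and> s < \<delta>"
    unfolding eventually_at_right_field using dpos by (intro exI[of _ \<delta>]) auto
  obtain s where s: "0 < s" "s < \<delta>" "f ((1/s) *\<^sub>R F z s) \<noteq> 0"
    using eventually_happens[OF eventually_conj[OF ev2 ev1]] trivial_limit_at_right_real by auto
  define x1 where "x1 = (1/s) *\<^sub>R F z s"
  have x1D: "x1 \<in> gen_dom T" using xdom[OF s(1,2)] x1_def by blast
  have fC1: "fC f x1 \<noteq> 0" using s(3) Re_fC[OF fl, of x1] x1_def by auto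
  define x0 where "x0 = scaleC (1 / fC f x1) x1"
  have x0D: "x0 \<in> gen_dom T" using gen_scaleC[OF x1D] x0_def by blast
  have fx0: "fC f x0 = 1" using fC_scaleC[OF fl] fC1 x0_def by simp
  define K where "K = norm x0 + 2"
  have K: "K > 0" by (simp add: K_def add_nonneg_pos)
  define nn where "nn x = max (norm x) (K * cmod (fC f x))" for x
  have fCb: "\<And>x. cmod (fC f x) \<le> 2 * B * norm x" using fC_bound[OF fl B(2)] .
  have cn: "is_cnorm nn"
    unfolding is_cnorm_def
  proof (intro conjI allI impI)
    fix x y
    have a1: "norm x \<le> nn x" "norm y \<le> nn y" "K * cmod (fC f x) \<le> nn x" "K * cmod (fC f y) \<le> nn y"
      by (simp_all add: nn_def)
    have "K * cmod (fC f (x+y)) \<le> K * (cmod (fC f x) + cmod (fC f y))"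
      using K by (intro mult_left_mono) (auto simp: fC_add[OF fl] norm_triangle_ineq)
    then show "nn (x + y) \<le> nn x + nn y"
      using a1 norm_triangle_ineq[of x y] unfolding nn_def[of "x+y"] by (intro max.boundedI) (simp_all add: distrib_left)
  next
    fix c x
    show "nn (scaleC c x) = cmod c * nn x"
      unfolding nn_def by (simp add: norm_scaleC fC_scaleC[OF fl] norm_mult max_mult_distrib_left mult.left_commute)
  next
    fix x assume "nn x = 0"
    then have "norm x \<le> 0" unfolding nn_def by (metis max.cobounded1)
    then show "x = 0" by simp
  qed
  have en: "equiv_norm nn"
  proof -
    have "1 * norm x \<le> nn x \<and> nn x \<le> (1 + K * 2 * B) * norm x" for x
    proof
      show "1 * norm x \<le> nn x" by (simp add: nn_def)
      have a: "norm x \<le> (1 + K * 2 * B) * norm x" using K B(1) by (simp add: algebra_simps)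
      have b1: "K * cmod (fC f x) \<le> K * (2 * B * norm x)" using K fCb by (intro mult_left_mono) auto
      have b2: "K * (2 * B * norm x) \<le> (1 + K * 2 * B) * norm x" by (simp add: algebra_simps)
      from a b1 b2 have "norm x \<le> (1 + K * 2 * B) * norm x" "K * cmod (fC f x) \<le> (1 + K * 2 * B) * norm x" by linarith+
      then show "nn x \<le> (1 + K * 2 * B) * norm x" by (simp add: nn_def)
    qed
    moreover have "1 + K * 2 * B > 0" using K B(1) by (simp add: add_pos_pos)
    ultimately show ?thesis unfolding equiv_norm_def using cn by (intro conjI exI[of _ 1] exI[of _ "1 + K * 2 * B"]) auto
  qed
  obtain l where l: "\<And>t. t \<ge> 0 \<Longrightarrow> opnorm_wrt nn (T t) \<le> exp (l * t)" using H en by blast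
  define c0 where "c0 = cmod (fC f (generator T x0))"
  define L0 where "L0 = \<bar>l\<bar> + c0 + 1"
  define R where "R = 1 + 2 * B * norm x0"
  have R: "R \<ge> 1" using B(1) by (simp add: R_def)
  have L0: "L0 > 0" by (simp add: L0_def c0_def add_nonneg_pos)
  obtain y1 where y1: "y1 \<in> gen_dom T" "norm y1 \<le> 1" "\<bar>f (generator T y1)\<bar> > L0 * R + 2 * B * c0"
    using fu by blast
  define y2 where "y2 = y1 - scaleC (fC f y1) x0"
  have y2D: "y2 \<in> gen_dom T" and Ay2: "generator T y2 = generator T y1 - scaleC (fC f y1) (generator T x0)"
    using gen_diff[OF y1(1) gen_scaleC[OF x0D, THEN conjunct1]] gen_scaleC[OF x0D] unfolding y2_def by auto
  have fy2: "fC f y2 = 0" unfolding y2_def by (simp add: fC_diff[OF fl] fC_scaleC[OF fl] fx0)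
  have cy1: "cmod (fC f y1) \<le> 2 * B"
  proof -
    have "2 * B * norm y1 \<le> 2 * B * 1" using y1(2) B(1) by (intro mult_left_mono) auto
    then show ?thesis using fCb[of y1] by simp
  qed
  have ny2: "norm y2 \<le> R"
  proof -
    have "norm y2 \<le> norm y1 + cmod (fC f y1) * norm x0"
      unfolding y2_def using norm_triangle_ineq4[of y1 "scaleC (fC f y1) x0"] by (simp add: norm_scaleC)
    also have "\<dots> \<le> 1 + 2 * B * norm x0" using y1(2) cy1 by (intro add_mono mult_right_mono) auto
    finally show ?thesis by (simp add: R_def)
  qed
  define w where "w = fC f (generator T y2)"
  have w: "cmod w > L0 * R"
  proof -
    have weq: "w = fC f (generator T y1) - fC f y1 * c0'" if "c0' = fC f (generator T x0)" for c0'
      using that by (simp add: w_def Ay2 fC_diff[OF fl] fC_scaleC[OF fl])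
    have "cmod (fC f (generator T y1)) - cmod (fC f y1 * fC f (generator T x0)) \<le> cmod w"
      using weq[OF refl] norm_triangle_ineq2 by metis
    moreover have "\<bar>f (generator T y1)\<bar> \<le> cmod (fC f (generator T y1))"
      using abs_Re_le_cmod[of "fC f (generator T y1)"] by (simp add: Re_fC[OF fl])
    moreover have "cmod (fC f y1 * fC f (generator T x0)) \<le> 2 * B * c0"
      unfolding norm_mult c0_def using cy1 by (intro mult_right_mono) auto
    ultimately show ?thesis using y1(3) by linarith
  qed
  have LR: "L0 * R > 0" using L0 R by simp
  have wpos: "cmod w > 0" using w LR by linarith
  define u where "u = cnj w / complex_of_real (cmod w * R)"
  define y where "y = scaleC u y2"
  have yD: "y \<in> gen_dom T" and Ay: "generator T y = scaleC u (generator T y2)"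
    using gen_scaleC[OF y2D] y_def by auto
  have fy: "fC f y = 0" using fy2 by (simp add: y_def fC_scaleC[OF fl])
  have fAy: "fC f (generator T y) = complex_of_real (cmod w / R)"
  proof -
    have "fC f (generator T y) = u * w" by (simp add: Ay fC_scaleC[OF fl] w_def)
    also have "\<dots> = (w * cnj w) / complex_of_real (cmod w * R)" by (simp add: u_def mult.commute)
    also have "w * cnj w = complex_of_real ((cmod w)^2)" by (rule complex_norm_square[symmetric])
    also have "complex_of_real ((cmod w)^2) / complex_of_real (cmod w * R) = complex_of_real ((cmod w)^2 / (cmod w * R))"
      by (rule of_real_divide[symmetric])
    also have r: "(cmod w)^2 / (cmod w * R) = cmod w / R" using wpos by (simp add: power2_eq_square)
    finally show ?thesis .
  qed
  have ny: "norm y \<le> 1"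
  proof -
    have cu: "cmod u = 1 / R" using wpos R by (simp add: u_def norm_divide norm_mult)
    have "norm y = cmod u * norm y2" by (simp add: y_def norm_scaleC)
    also have "\<dots> \<le> (1 / R) * R" unfolding cu using ny2 R by (intro mult_left_mono) auto
    finally show ?thesis using R by simp
  qed
  define x where "x = x0 + y"
  have xD: "x \<in> gen_dom T" and Ax: "generator T x = generator T x0 + generator T y"
    using gen_add[OF x0D yD] x_def by auto
  have fCx: "fC f x = 1" by (simp add: x_def fC_add[OF fl] fx0 fy)
  have fx: "f x = 1" using Re_fC[OF fl, of x] fCx by simp
  have nnx: "nn x = K"
  proof -
    have "norm x \<le> norm x0 + norm y" unfolding x_def by (rule norm_triangle_ineq)
    then have "norm x \<le> K" using ny by (simp add: K_def)
    then show ?thesis using fCx by (simp add: nn_def)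
  qed
  have fAx: "f (generator T x) > l + 1"
  proof -
    have "f (generator T x) = Re (fC f (generator T x0)) + cmod w / R"
      using Re_fC[OF fl, of "generator T x"] by (simp add: Ax fC_add[OF fl] fAy)
    moreover have "- c0 \<le> Re (fC f (generator T x0))" using abs_Re_le_cmod[of "fC f (generator T x0)"] by (simp add: c0_def)
    moreover have "cmod w / R > L0" using w R by (simp add: pos_less_divide_eq)
    ultimately show ?thesis by (simp add: L0_def)
  qed
  have lim1: "((\<lambda>h. (f (T h x) - 1) / h) \<longlongrightarrow> f (generator T x)) (at_right 0)"
  proof -
    have "((\<lambda>h. f (quot x h)) \<longlongrightarrow> f (generator T x)) (at_right 0)"
      using bounded_linear.tendsto[OF fl gen_lim[OF xD]] .
    moreover have "f (quot x h) = (f (T h x) - 1) / h" for h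
      using linear_simps[OF fl] fx by (simp add: divide_inverse mult.commute)
    ultimately show ?thesis by simp
  qed
  have lim2: "((\<lambda>h. (exp (l * h) - 1) / h) \<longlongrightarrow> l) (at_right 0)"
  proof -
    have "((\<lambda>h. exp (l * h)) has_field_derivative exp (l * 0) * (l * 1)) (at 0)"
      by (intro derivative_eq_intros) auto
    then have "((\<lambda>h. (exp (l * h) - exp (l * 0)) / (h - 0)) \<longlongrightarrow> exp (l * 0) * (l * 1)) (at 0)"
      by (rule has_field_derivative_iff[THEN iffD1])
    then have "((\<lambda>h. (exp (l * h) - 1) / h) \<longlongrightarrow> l) (at 0)" by simp
    then show ?thesis by (rule tendsto_mono[OF at_within_le_at])
  qed
  have "((\<lambda>h. (f (T h x) - 1) / h - (exp (l * h) - 1) / h) \<longlongrightarrow> f (generator T x) - l) (at_right 0)"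
    by (intro tendsto_diff lim1 lim2)
  then have ev3: "\<forall>\<^sub>F h in at_right 0. 0 < (f (T h x) - 1) / h - (exp (l * h) - 1) / h"
    using fAx by (intro order_tendstoD(1)) auto
  obtain h where h: "h > 0" "0 < (f (T h x) - 1) / h - (exp (l * h) - 1) / h"
    using eventually_happens[OF eventually_conj[OF ev_pos ev3]] trivial_limit_at_right_real by auto
  have fTh: "f (T h x) > exp (l * h)"
  proof -
    have "0 < (f (T h x) - exp (l * h)) / h" using h(2) by (simp add: diff_divide_distrib)
    then show ?thesis using h(1) by (simp add: zero_less_divide_iff)
  qed
  have nnT: "nn (T h x) > exp (l * h) * K"
  proof -
    have "f (T h x) \<le> cmod (fC f (T h x))" using abs_Re_le_cmod[of "fC f (T h x)"] Re_fC[OF fl] by simp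
    then have "K * f (T h x) \<le> K * cmod (fC f (T h x))" using K by (intro mult_left_mono) auto
    moreover have "K * f (T h x) > K * exp (l * h)" using fTh K by simp
    moreover have "K * cmod (fC f (T h x)) \<le> nn (T h x)" by (simp add: nn_def)
    ultimately show ?thesis by (simp add: mult.commute)
  qed
  define v where "v = (1/K) *\<^sub>R x"
  have nv: "nn v = 1" using cnorm_scaleR[OF cn] nnx K by (simp add: v_def)
  have "nn (T h v) = (1/K) * nn (T h x)" using TscaleR[of h] cnorm_scaleR[OF cn] K h by (simp add: v_def)
  then have e: "K * nn (T h v) = nn (T h x)" using K by simp
  have "K * exp (l * h) < K * nn (T h v)" using e nnT by (simp add: mult.commute)
  then have gt: "nn (T h v) > exp (l * h)" using K by simp
  have "nn (T h v) \<le> opnorm_wrt nn (T h)"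
    unfolding opnorm_wrt_def by (rule cSup_upper) (use nv opnorm_bdd[OF en] h in auto)
  moreover have "opnorm_wrt nn (T h) \<le> exp (l * h)" using l h by auto
  ultimately show False using gt by linarith
qed

end

theorem corollary1:
  fixes T :: "real \<Rightarrow> 'a::complex_banach \<Rightarrow> 'a"
  assumes "c0_semigroup T"
  shows "generator_bounded T \<longleftrightarrow>
    (\<forall>n. equiv_norm n \<longrightarrow> (\<exists>l::real. \<forall>t\<ge>0. opnorm_wrt n (T t) \<le> exp (l * t)))"
proof -
  interpret sg T by unfold_locales (rule assms)
  obtain \<delta> M where "\<delta> > 0" "M \<ge> 1" "\<forall>t\<in>{0..\<delta>}. \<forall>x. norm (T t x) \<le> M * norm x"
    using local_bound by blast
  then interpret sgb T \<delta> M by unfold_locales auto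
  show ?thesis using forward backward by blast
qed


end
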